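(* Let $U$ be a nonempty open subset of $\mathbb{R}^d$ and $(x_n)_{n\ge1}$ a sequence in $\mathbb{R}^d$. Assume there is a nonempty dyadic cube $\lambda\subseteq U$ such that $\liminf_{j\to\infty}2^{-dj}\#\mathrm{M}((x_n)_{n\ge1};\lambda,j)=0$. Then $(x_n)_{n\ge1}$ is not uniformly eutaxic in $U$.
   Context: Fix a norm $|\cdot|$ on $\mathbb{R}^d$; $\mathcal{L}^d$ is Lebesgue measure. $\mathrm{P}_d$ is the set of real sequences $(r_n)_{n\ge1}$ with $r_{n+1}\le r_n$ for all $n$, $r_n\to0$ and $\sum_n r_n^d=\infty$. A sequence $(x_n)$ in $\mathbb{R}^d$ is uniformly eutaxic in $U$ if for every $(r_n)\in\mathrm{P}_d$, $\mathcal{L}^d$-almost every $x\in U$ satisfies $|x-x_n|<r_n$ for infinitely many $n$. A dyadic cube is a set $\lambda=2^{-j}(k+[0,1)^d)$ with $j\in\mathbb{Z}$, $k\in\mathbb{Z}^d$; its generation is $\langle\lambda\rangle=j$. For a nonempty dyadic cube $\lambda$ and an integer $j\ge0$, $\mathrm{M}((x_n)_{n\ge1};\lambda,j)$ is the set of dyadic cubes $\lambda'\subseteq\lambda$ of generation $\langle\lambda\rangle+j$ such that $x_n\in\lambda'$ for some $n\le2^{d\langle\lambda'\rangle}$. *)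

theory Defs
  imports "HOL-Analysis.Analysis"
begin

definition is_norm :: "('a::real_vector \<Rightarrow> real) \<Rightarrow> bool" where
  "is_norm N \<longleftrightarrow> (\<forall>x. 0 \<le> N x) \<and> (\<forall>x. N x = 0 \<longleftrightarrow> x = 0)
     \<and> (\<forall>c x. N (scaleR c x) = \<bar>c\<bar> * N x) \<and> (\<forall>x y. N (x + y) \<le> N x + N y)"

text \<open>The class P_d of radius sequences (indexed from n = 1; r 0 is irrelevant).\<close>
definition P_seq :: "nat \<Rightarrow> (nat \<Rightarrow> real) \<Rightarrow> bool" where
  "P_seq d r \<longleftrightarrow> (\<forall>n\<ge>1. r (Suc n) \<le> r n) \<and> (r \<longlonglongrightarrow> 0)
     \<and> \<not> summable (\<lambda>n. r (Suc n) ^ d)"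

definition unif_eutaxic ::
  "(real^'n \<Rightarrow> real) \<Rightarrow> (nat \<Rightarrow> real^'n) \<Rightarrow> (real^'n) set \<Rightarrow> bool" where
  "unif_eutaxic N x U \<longleftrightarrow> (\<forall>r. P_seq CARD('n) r \<longrightarrow>
     (AE y in lebesgue. y \<in> U \<longrightarrow> infinite {n. n \<ge> 1 \<and> N (y - x n) < r n}))"

text \<open>Dyadic cube 2^(-j)(k + [0,1)^d).\<close>
definition dyadic_cube :: "int \<Rightarrow> int^'n \<Rightarrow> (real^'n) set" where
  "dyadic_cube j k = {y. \<forall>i. real_of_int (k$i) \<le> 2 powi j * y$i
                          \<and> 2 powi j * y$i < real_of_int (k$i) + 1}"

text \<open>M((x_n); lambda, j) for lambda = dyadic_cube j0 k0 (of generation j0).\<close>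
definition dyadic_M :: "(nat \<Rightarrow> real^'n) \<Rightarrow> int \<Rightarrow> int^'n \<Rightarrow> nat \<Rightarrow> (real^'n) set set" where
  "dyadic_M x j0 k0 j = {l. \<exists>k. l = dyadic_cube (j0 + int j) k \<and> l \<subseteq> dyadic_cube j0 k0
      \<and> (\<exists>n\<ge>1. real n \<le> 2 powi (int CARD('n) * (j0 + int j)) \<and> x n \<in> l)}"

end

theory Submission
  imports Defs
begin

lemma is_norm_sum:
  assumes "is_norm N" "finite I"
  shows "N (sum f I) \<le> (\<Sum>i\<in>I. N (f i))"
  using assms(2)
proof (induction rule: finite_induct)
  case empty
  have "N 0 = 0" using assms(1) unfolding is_norm_def by blast
  then show ?case by simp
next
  case (insert i I)
  have "N (sum f (insert i I)) = N (f i + sum f I)" using insert by simp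
  also have "\<dots> \<le> N (f i) + N (sum f I)" using assms(1) unfolding is_norm_def by blast
  finally show ?case using insert by simp
qed

lemma is_norm_upper:
  fixes N :: "real^'n \<Rightarrow> real"
  assumes "is_norm N"
  shows "\<exists>B. \<forall>v. N v \<le> B * norm v"
proof -
  have hom: "\<And>c x. N (c *\<^sub>R x) = \<bar>c\<bar> * N x" using assms unfolding is_norm_def by blast
  define B where "B = (\<Sum>i\<in>UNIV. N (axis i (1::real)))"
  have "N v \<le> B * norm v" for v
  proof -
    have "N v = N (\<Sum>i\<in>UNIV. v $ i *\<^sub>R axis i 1)"
      using basis_expansion[of v] by (simp add: scalar_mult_eq_scaleR)
    also have "\<dots> \<le> (\<Sum>i\<in>UNIV. N (v $ i *\<^sub>R axis i 1))" by (rule is_norm_sum[OF assms]) simp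
    also have "\<dots> = (\<Sum>i\<in>UNIV. \<bar>v $ i\<bar> * N (axis i 1))" by (simp add: hom)
    also have "\<dots> \<le> (\<Sum>i\<in>UNIV. norm v * N (axis i 1))"
      apply (rule sum_mono) apply (rule mult_right_mono)
      using component_le_norm_cart assms unfolding is_norm_def by auto
    also have "\<dots> = B * norm v" by (simp add: B_def sum_distrib_left mult.commute)
    finally show ?thesis .
  qed
  then show ?thesis by blast
qed

lemma is_norm_lower:
  fixes N :: "real^'n \<Rightarrow> real"
  assumes "is_norm N"
  shows "\<exists>c>0. \<forall>v. c * norm v \<le> N v"
proof -
  have hom: "\<And>c x. N (c *\<^sub>R x) = \<bar>c\<bar> * N x" and tri: "\<And>x y. N (x + y) \<le> N x + N y"
    and pos: "\<And>x. N x = 0 \<longleftrightarrow> x = 0" and nn: "\<And>x. 0 \<le> N x"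
    using assms unfolding is_norm_def by blast+
  obtain B where B: "\<And>v. N v \<le> B * norm v" using is_norm_upper[OF assms] by blast
  have lip: "\<bar>N u - N v\<bar> \<le> B * norm (u - v)" for u v
  proof -
    have "N u \<le> N v + N (u - v)" using tri[of v "u - v"] by simp
    moreover have "N v \<le> N u + N (v - u)" using tri[of u "v - u"] by simp
    moreover have "N (v - u) = N (u - v)" using hom[of "-1" "u - v"] by simp
    ultimately show ?thesis using B[of "u - v"] by linarith
  qed
  have cont: "continuous_on UNIV N"
  proof (rule continuous_at_imp_continuous_on, intro ballI)
    fix x :: "real^'n"
    show "isCont N x"
    proof (rule continuous_at_eps_delta[THEN iffD2], intro allI impI)
      fix e :: real assume e: "e > 0"
      show "\<exists>d>0. \<forall>x'. dist x' x < d \<longrightarrow> dist (N x') (N x) < e"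
      proof (intro exI[of _ "e / (\<bar>B\<bar> + 1)"] conjI allI impI)
        show "0 < e / (\<bar>B\<bar> + 1)" using e by simp
        fix x' assume "dist x' x < e / (\<bar>B\<bar> + 1)"
        hence "norm (x' - x) * (\<bar>B\<bar> + 1) < e" by (simp add: dist_norm field_simps)
        moreover have "B * norm (x' - x) \<le> norm (x' - x) * (\<bar>B\<bar> + 1)"
          by (smt (verit) mult.commute mult_left_mono norm_ge_zero)
        ultimately show "dist (N x') (N x) < e" using lip[of x' x] by (simp add: dist_real_def)
      qed
    qed
  qed
  have "sphere (0::real^'n) 1 \<noteq> {}" by (simp add: sphere_eq_empty)
  then obtain z where z: "z \<in> sphere 0 1" and zmin: "\<And>y. y \<in> sphere 0 1 \<Longrightarrow> N z \<le> N y"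
    using continuous_attains_inf[of "sphere (0::real^'n) 1" N] cont
    by (meson compact_sphere continuous_on_subset subset_UNIV)
  have "z \<noteq> 0" using z by auto
  hence cpos: "N z > 0" using pos nn by (metis less_eq_real_def)
  have "N z * norm v \<le> N v" for v
  proof (cases "v = 0")
    case True then show ?thesis using nn by simp
  next
    case False
    have "N z \<le> N ((1 / norm v) *\<^sub>R v)" using zmin False by simp
    also have "\<dots> = N v / norm v" using hom by simp
    finally show ?thesis using False by (simp add: field_simps)
  qed
  then show ?thesis using cpos by blast
qed

lemma emeasure_cbox_cart:
  fixes a b :: "real^'n"
  assumes "\<And>i. a $ i \<le> b $ i"
  shows "emeasure lebesgue (cbox a b) = ennreal (\<Prod>i\<in>UNIV. b $ i - a $ i)"
proof -
  have ne: "cbox a b \<noteq> {}" using assms proof - have "a \<in> cbox a b" using assms by (simp add: mem_box_cart) then show ?thesis by blast qed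
  have "emeasure lebesgue (cbox a b) = emeasure lborel (cbox a b)" by simp
  also have "\<dots> = ennreal (Henstock_Kurzweil_Integration.content (cbox a b))"
    by (rule emeasure_eq_ennreal_measure) (simp add: emeasure_lborel_cbox_eq)
  also have "\<dots> = ennreal (\<Prod>i\<in>UNIV. b $ i - a $ i)" using content_cbox_cart[OF ne] by simp
  finally show ?thesis .
qed

lemma cube_floor:
  assumes "y \<in> dyadic_cube g k"
  shows "k $ i = \<lfloor>2 powi g * y $ i\<rfloor>"
  using assms unfolding dyadic_cube_def by (auto intro!: floor_unique[symmetric])

lemma cube_mem: "y \<in> dyadic_cube g (\<chi> i. \<lfloor>2 powi g * y $ i\<rfloor>)"
  unfolding dyadic_cube_def by simp

lemma cube_inj:
  assumes "dyadic_cube g k = dyadic_cube g k'"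
  shows "k = k'"
proof -
  define p :: "real^'a" where "p = (\<chi> i. (real_of_int (k$i) + 1/2) / 2 powi g)"
  have "p \<in> dyadic_cube g k" unfolding dyadic_cube_def p_def by simp
  hence "p \<in> dyadic_cube g k'" using assms by simp
  with \<open>p \<in> dyadic_cube g k\<close> show ?thesis
    using cube_floor by (metis vec_eq_iff)
qed

lemma liminf_freq:
  fixes f :: "nat \<Rightarrow> real"
  assumes "liminf (\<lambda>j. ereal (f j)) = 0" "e > 0"
  shows "\<exists>j\<ge>J0. f j < e"
proof (rule ccontr)
  assume "\<not> ?thesis" then have "\<forall>j\<ge>J0. e \<le> f j" by auto
  hence "eventually (\<lambda>j. ereal e \<le> ereal (f j)) sequentially"
    by (auto simp: eventually_sequentially)
  hence "ereal e \<le> liminf (\<lambda>j. ereal (f j))" by (rule Liminf_bounded)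
  with assms show False by simp
qed


theorem theorem8p5:
  fixes N :: "real^'n \<Rightarrow> real" and U :: "(real^'n) set" and x :: "nat \<Rightarrow> real^'n"
  assumes "is_norm N"
    and "open U" and "U \<noteq> {}"
    and "dyadic_cube j0 k0 \<subseteq> U"
    and "liminf (\<lambda>j. ereal (2 powi (- (int CARD('n) * int j)) * real (card (dyadic_M x j0 k0 j)))) = 0"
  shows "\<not> unif_eutaxic N x U"
proof
  assume eut: "unif_eutaxic N x U"
  define d where "d = CARD('n)"
  have d1: "d \<ge> 1" unfolding d_def by (simp add: Suc_leI)
  obtain c where cpos: "c > 0" and cN: "\<And>v. c * norm v \<le> N v"
    using is_norm_lower[OF assms(1)] by blast
  define t :: real where "t = 2 powi j0"
  have tpos: "t > 0" unfolding t_def by simp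
  define lam where "lam = dyadic_cube j0 k0"
  define a0 :: "real^'n" where "a0 = (\<chi> i. (real_of_int (k0$i) + 1/4) / t)"
  define b0 :: "real^'n" where "b0 = (\<chi> i. (real_of_int (k0$i) + 3/4) / t)"
  define K where "K = cbox a0 b0"
  define vK :: real where "vK = (1 / (2*t)) ^ d"
  have vKpos: "vK > 0" unfolding vK_def using tpos by simp
  have measK: "emeasure lebesgue K = ennreal vK"
  proof -
    have "emeasure lebesgue K = ennreal (\<Prod>i\<in>UNIV. b0 $ i - a0 $ i)"
      unfolding K_def by (rule emeasure_cbox_cart) (use tpos in \<open>simp add: a0_def b0_def divide_right_mono\<close>)
    also have "(\<Prod>i\<in>UNIV. b0 $ i - a0 $ i) = (\<Prod>i\<in>(UNIV::'n set). 1 / (2*t))"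
      by (rule prod.cong) (use tpos in \<open>auto simp: a0_def b0_def field_simps\<close>)
    also have "\<dots> = vK" by (simp add: vK_def d_def)
    finally show ?thesis .
  qed
  define f where "f j = 2 powi (- (int d * int j)) * real (card (dyadic_M x j0 k0 j))" for j
  have freq: "\<exists>j\<ge>J0. f j < e" if "e > 0" for e J0
    using liminf_freq[OF assms(5)[folded d_def, folded f_def] that] by blast
  define C0 :: real where "C0 = 3 ^ d / t ^ d"
  have C0pos: "C0 > 0" unfolding C0_def using tpos by simp
  define eta where "eta = vK / (4 * C0)"
  have etapos: "eta > 0" unfolding eta_def using vKpos C0pos by simp
  define e where "e m = eta * (1/2) ^ m" for m :: nat
  have epos: "e m > 0" for m unfolding e_def using etapos by simp
  obtain pick where pick: "\<And>J0 m. pick J0 m \<ge> J0 \<and> f (pick J0 m) < e m"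
    using freq[OF epos] by metis
  define B where "B = nat (- j0) + 2"
  define J where "J = rec_nat (pick B 0) (\<lambda>m jm. pick (jm + 1) (Suc m))"
  have J0: "J 0 = pick B 0" and JS: "J (Suc m) = pick (J m + 1) (Suc m)" for m
    by (simp_all add: J_def)
  have Jf: "f (J m) < e m" for m by (cases m) (simp_all add: J0 JS pick)
  have JB: "J m \<ge> B" for m
  proof (induction m)
    case 0 then show ?case using pick by (simp add: J0)
  next
    case (Suc m) then show ?case using pick[of "J m + 1" "Suc m"] by (simp add: JS)
  qed
  have Jmono: "J m < J (Suc m)" for m using pick[of "J m + 1" "Suc m"] by (simp add: JS)
  define g where "g m = j0 + int (J m)" for m
  have gge: "g m \<ge> 2" for m using JB[of m] unfolding g_def B_def by linarith
  define G where "G m = nat (g m)" for m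
  have intG: "int (G m) = g m" for m using gge[of m] unfolding G_def by simp
  have Gmono: "strict_mono G"
  proof (rule strict_monoI_Suc)
    fix m
    have "g m < g (Suc m)" using Jmono[of m] unfolding g_def by simp
    then show "G m < G (Suc m)" using gge[of m] unfolding G_def by simp
  qed
  define T :: "nat \<Rightarrow> real" where "T m = 2 ^ G m" for m
  have Tpow: "2 powi g m = T m" for m by (metis intG power_int_of_nat T_def)
  have Tt: "T m = t * 2 ^ J m" for m
    unfolding Tpow[symmetric] g_def t_def by (simp add: power_int_add)
  have Tpos: "T m > 0" for m unfolding T_def by simp
  define s where "s m = 1 / T m" for m
  have spos: "s m > 0" for m unfolding s_def using Tpos by simp
  have s4: "s m \<le> 1 / (4 * t)" for m
  proof -
    have "J m \<ge> 2" using JB[of m] unfolding B_def by simp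
    hence "(4::real) \<le> 2 ^ J m" using power_increasing[of 2 "J m" "2::real"] by simp
    hence "4 * t \<le> T m" using Tt tpos by simp
    thus ?thesis unfolding s_def using tpos by (simp add: frac_le)
  qed
  define Nb where "Nb m = (2::nat) ^ (d * G m)" for m
  have NbT: "real (Nb m) = T m ^ d" for m unfolding Nb_def T_def by (simp add: power_mult[symmetric] mult.commute)
  have Nbpow: "2 powi (int d * g m) = real (Nb m)" for m
    by (simp add: NbT power_int_mult Tpow mult.commute[of "int d"] flip: power_int_of_nat)
  have Nbmono: "mono Nb"
    unfolding Nb_def using Gmono by (intro monoI) (simp add: strict_mono_less_eq)
  have Nbge: "Nb m \<ge> m" for m
  proof -
    have "m \<le> G m" using Gmono by (rule strict_mono_imp_increasing)
    also have "G m \<le> d * G m" using d1 by simp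
    also have "\<dots> < 2 ^ (d * G m)" by (rule less_exp)
    finally show ?thesis unfolding Nb_def by simp
  qed
  have Nb2: "2 * Nb m \<le> Nb (Suc m)" for m
  proof -
    have "G m + 1 \<le> G (Suc m)" using Gmono by (simp add: strict_mono_def Suc_le_eq)
    hence "d * G m + 1 \<le> d * G (Suc m)" using d1
      by (metis add_mult_distrib2 add_le_mono le_trans mult.right_neutral mult_le_mono2 order_refl)
    hence "(2::nat) ^ (d * G m + 1) \<le> 2 ^ (d * G (Suc m))" by (rule power_increasing) simp
    thus ?thesis unfolding Nb_def by simp
  qed
  define b where "b n = (LEAST m. n \<le> Nb m)" for n
  have bI: "n \<le> Nb (b n)" for n unfolding b_def by (rule LeastI[of _ n]) (rule Nbge)
  have ble: "n \<le> Nb m \<Longrightarrow> b n \<le> m" for n m unfolding b_def by (rule Least_le)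
  have bgt: "Nb m < n \<Longrightarrow> m < b n" for n m
    using bI[of n] Nbmono by (meson le_trans monoD not_le)
  define r where "r n = c * s (b n)" for n
  have smono: "s m' \<le> s m" if "m \<le> m'" for m m'
  proof -
    have "G m \<le> G m'" using Gmono that by (simp add: strict_mono_less_eq)
    hence "T m \<le> T m'" unfolding T_def by (simp add: power_increasing)
    thus ?thesis unfolding s_def using Tpos by (simp add: frac_le)
  qed
  have shalf: "s m \<le> (1/2) ^ m" for m
  proof -
    have "m \<le> G m" using Gmono by (rule strict_mono_imp_increasing)
    hence "(2::real) ^ m \<le> T m" unfolding T_def by (simp add: power_increasing)
    thus ?thesis unfolding s_def by (simp add: power_one_over frac_le)
  qed
  have rmono: "r n' \<le> r n" if "n \<le> n'" for n n'
  proof -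
    have "b n \<le> b n'" using ble[of n "b n'"] bI[of n'] that by simp
    thus ?thesis unfolding r_def using smono cpos by simp
  qed
  have rnn: "r n \<ge> 0" for n unfolding r_def using cpos spos[of "b n"] by simp
  have Pr: "P_seq d r"
    unfolding P_seq_def
  proof (intro conjI allI impI)
    show "r (Suc n) \<le> r n" for n using rmono by simp
  next
    show "r \<longlonglongrightarrow> 0"
    proof (rule LIMSEQ_I)
      fix eps :: real assume eps: "eps > 0"
      obtain m where m: "(1/2::real) ^ m < eps / c" using real_arch_pow_inv[of "eps / c" "1/2::real"] eps cpos by auto
      show "\<exists>no. \<forall>n\<ge>no. norm (r n - 0) < eps"
      proof (intro exI allI impI)
        fix n assume "Suc (Nb m) \<le> n"
        hence "m < b n" using bgt by simp
        hence "s (b n) \<le> s m" using smono by simp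
        also have "\<dots> < eps / c" using shalf m by (rule le_less_trans)
        finally have "c * s (b n) < eps" using cpos by (simp add: field_simps)
        thus "norm (r n - 0) < eps" using rnn[of n] unfolding r_def by simp
      qed
    qed
  next
    show "\<not> summable (\<lambda>n. r (Suc n) ^ d)"
    proof
      assume "summable (\<lambda>n. r (Suc n) ^ d)"
      then obtain N1 where N1: "\<And>m n. m \<ge> N1 \<Longrightarrow> norm (\<Sum>k\<in>{m..<n}. r (Suc k) ^ d) < c ^ d / 2"
        unfolding summable_Cauchy using cpos by (metis half_gt_zero zero_less_power)
      define m where "m = N1"
      have bS: "b (Suc k) = Suc m" if "k \<in> {Nb m..<Nb (Suc m)}" for k
        using ble[of "Suc k" "Suc m"] bgt[of m "Suc k"] that by auto
      have "(\<Sum>k\<in>{Nb m..<Nb (Suc m)}. r (Suc k) ^ d) = (\<Sum>k\<in>{Nb m..<Nb (Suc m)}. (c * s (Suc m)) ^ d)"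
        by (rule sum.cong) (simp_all add: r_def bS)
      also have "\<dots> = (real (Nb (Suc m)) - real (Nb m)) * (c ^ d / real (Nb (Suc m)))"
        using Nbmono[THEN monoD, of m "Suc m"] by (simp add: of_nat_diff s_def NbT power_mult_distrib power_one_over power_divide)
      also have "\<dots> \<ge> c ^ d / 2"
      proof -
        have "2 * real (Nb m) \<le> real (Nb (Suc m))" using Nb2[of m] by linarith
        moreover have "real (Nb (Suc m)) > 0" using NbT Tpos by simp
        ultimately show ?thesis using cpos by (simp add: field_simps)
      qed
      finally have "c ^ d / 2 \<le> (\<Sum>k\<in>{Nb m..<Nb (Suc m)}. r (Suc k) ^ d)" .
      moreover have "Nb m \<ge> N1" using Nbge[of m] unfolding m_def .
      ultimately show False using N1[of "Nb m" "Nb (Suc m)"] by simp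
    qed
  qed
  have AE: "AE y in lebesgue. y \<in> U \<longrightarrow> infinite {n. n \<ge> 1 \<and> N (y - x n) < r n}"
    using eut Pr unfolding unif_eutaxic_def d_def by blast
  then obtain N0 where N0: "{y \<in> space lebesgue. \<not> (y \<in> U \<longrightarrow> infinite {n. n \<ge> 1 \<and> N (y - x n) < r n})} \<subseteq> N0"
    "emeasure lebesgue N0 = 0" "N0 \<in> sets lebesgue"
    by (rule AE_E)
  define KS where "KS m = {k. dyadic_cube (g m) k \<subseteq> lam \<and> (\<exists>n\<ge>1. n \<le> Nb m \<and> x n \<in> dyadic_cube (g m) k)}" for m
  have Meq: "dyadic_M x j0 k0 (J m) = dyadic_cube (g m) ` KS m" for m
  proof -
    have e1: "2 powi (int CARD('n) * (j0 + int (J m))) = real (Nb m)" using Nbpow[of m] unfolding d_def g_def .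
    show ?thesis unfolding dyadic_M_def KS_def lam_def e1 g_def by auto
  qed
  have KSsub: "KS m \<subseteq> (\<lambda>n. \<chi> i. \<lfloor>T m * x n $ i\<rfloor>) ` {1..Nb m}" for m
  proof
    fix k assume "k \<in> KS m"
    then obtain n where n: "n \<ge> 1" "n \<le> Nb m" "x n \<in> dyadic_cube (g m) k" unfolding KS_def by blast
    have "k = (\<chi> i. \<lfloor>T m * x n $ i\<rfloor>)" using cube_floor[OF n(3)] Tpow by (simp add: vec_eq_iff)
    thus "k \<in> (\<lambda>n. \<chi> i. \<lfloor>T m * x n $ i\<rfloor>) ` {1..Nb m}" using n by auto
  qed
  have KSfin: "finite (KS m)" for m using KSsub by (rule finite_subset) simp
  have cardKS: "real (card (KS m)) < e m * 2 ^ (d * J m)" for m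
  proof -
    have "card (dyadic_M x j0 k0 (J m)) = card (KS m)"
      unfolding Meq by (rule card_image) (meson cube_inj inj_onI)
    hence "f (J m) = real (card (KS m)) / 2 ^ (d * J m)"
      unfolding f_def by (simp add: power_int_minus_divide flip: of_nat_mult power_int_of_nat)
    hence "real (card (KS m)) = f (J m) * 2 ^ (d * J m)" by simp
    moreover have "f (J m) * 2 ^ (d * J m) < e m * (2::real) ^ (d * J m)"
      by (rule mult_strict_right_mono[OF Jf]) simp
    ultimately show ?thesis by simp
  qed
  define lo :: "nat \<Rightarrow> int^'n \<Rightarrow> real^'n" where "lo m k = (\<chi> i. (real_of_int (k$i) - 1) * s m)" for m k
  define hi :: "nat \<Rightarrow> int^'n \<Rightarrow> real^'n" where "hi m k = (\<chi> i. (real_of_int (k$i) + 2) * s m)" for m k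
  define A where "A m = (\<Union>k\<in>KS m. cbox (lo m k) (hi m k))" for m
  have cbox_sets: "cbox u v \<in> sets lebesgue" for u v :: "real^'n"
    using lmeasurable_cbox fmeasurableD by blast
  have Ameas: "A m \<in> sets lebesgue" for m
    unfolding A_def using KSfin[of m] cbox_sets by blast
  have Ale: "emeasure lebesgue (A m) \<le> ennreal (C0 * e m)" for m
  proof -
    have "emeasure lebesgue (A m) \<le> (\<Sum>k\<in>KS m. emeasure lebesgue (cbox (lo m k) (hi m k)))"
      unfolding A_def using KSfin[of m] cbox_sets by (intro emeasure_subadditive_finite) auto
    also have "\<dots> = (\<Sum>k\<in>KS m. ennreal ((3 * s m) ^ d))"
    proof (rule sum.cong)
      fix k assume "k \<in> KS m"
      have "emeasure lebesgue (cbox (lo m k) (hi m k)) = ennreal (\<Prod>i\<in>UNIV. hi m k $ i - lo m k $ i)"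
        by (rule emeasure_cbox_cart) (use spos[of m] in \<open>simp add: lo_def hi_def\<close>)
      also have "(\<Prod>i\<in>UNIV. hi m k $ i - lo m k $ i) = (\<Prod>i\<in>(UNIV::'n set). 3 * s m)"
        by (rule prod.cong) (simp_all add: lo_def hi_def algebra_simps)
      finally show "emeasure lebesgue (cbox (lo m k) (hi m k)) = ennreal ((3 * s m) ^ d)"
        by (simp add: d_def)
    qed simp
    also have "\<dots> = ennreal (real (card (KS m)) * (3 * s m) ^ d)"
      using spos[of m] by (simp add: ennreal_mult' ennreal_of_nat_eq_real_of_nat)
    also have "\<dots> \<le> ennreal (C0 * e m)"
    proof (rule ennreal_leI)
      have "(3 * s m) ^ d = C0 / 2 ^ (d * J m)"
        unfolding s_def C0_def Tt by (simp add: power_divide power_mult_distrib power_mult mult.commute[of d])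
      hence "real (card (KS m)) * (3 * s m) ^ d = C0 * (real (card (KS m)) / 2 ^ (d * J m))" by simp
      also have "\<dots> \<le> C0 * e m"
        using cardKS[of m] C0pos by (intro mult_left_mono) (simp_all add: field_simps)
      finally show "real (card (KS m)) * (3 * s m) ^ d \<le> C0 * e m" .
    qed
    finally show ?thesis .
  qed
  have Klam: "K \<subseteq> lam"
  proof
    fix y assume "y \<in> K"
    hence "(real_of_int (k0$i) + 1/4) / t \<le> y $ i \<and> y $ i \<le> (real_of_int (k0$i) + 3/4) / t" for i
      unfolding K_def a0_def b0_def by (simp add: mem_box_cart)
    hence h: "real_of_int (k0$i) + 1/4 \<le> t * y $ i \<and> t * y $ i \<le> real_of_int (k0$i) + 3/4" for i
      using tpos by (simp add: field_simps)
    have "real_of_int (k0$i) \<le> t * y $ i \<and> t * y $ i < real_of_int (k0$i) + 1" for i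
      using h[of i] by linarith
    thus "y \<in> lam" unfolding lam_def dyadic_cube_def t_def[symmetric] by simp
  qed
  have cover: "K \<subseteq> N0 \<union> (\<Union>m. A m)"
  proof
    fix y assume yK: "y \<in> K"
    show "y \<in> N0 \<union> (\<Union>m. A m)"
    proof (cases "y \<in> N0")
      case True then show ?thesis by simp
    next
      case False
      have "y \<in> U" using yK Klam assms(4) unfolding lam_def by blast
      hence "infinite {n. n \<ge> 1 \<and> N (y - x n) < r n}" using N0(1) False by auto
      then obtain n where n1: "n \<ge> 1" and nN: "N (y - x n) < r n"
        using not_finite_existsD by blast
      define m where "m = b n"
      have "c * norm (y - x n) < c * s m" using cN[of "y - x n"] nN unfolding r_def m_def by simp
      hence nm: "norm (y - x n) < s m" using cpos by simp
      have close: "\<bar>y $ i - x n $ i\<bar> < s m" for i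
        using component_le_norm_cart[of "y - x n" i] nm by simp
      have yb: "(real_of_int (k0$i) + 1/4) / t \<le> y $ i \<and> y $ i \<le> (real_of_int (k0$i) + 3/4) / t" for i
        using yK unfolding K_def a0_def b0_def by (simp add: mem_box_cart)
      have xin: "real_of_int (k0$i) < t * x n $ i \<and> t * x n $ i < real_of_int (k0$i) + 1" for i
      proof -
        have "t * s m \<le> 1/4" using s4[of m] tpos by (simp add: field_simps)
        moreover have "\<bar>t * y $ i - t * x n $ i\<bar> < t * s m"
        proof -
          have "\<bar>t * y $ i - t * x n $ i\<bar> = t * \<bar>y $ i - x n $ i\<bar>"
            using tpos by (simp add: abs_mult flip: right_diff_distrib)
          thus ?thesis using close[of i] tpos by (simp add: mult_strict_left_mono)
        qed
        moreover have "real_of_int (k0$i) + 1/4 \<le> t * y $ i \<and> t * y $ i \<le> real_of_int (k0$i) + 3/4"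
          using yb[of i] tpos by (simp add: field_simps)
        ultimately show ?thesis by linarith
      qed
      define k where "k = (\<chi> i. \<lfloor>T m * x n $ i\<rfloor>)"
      have xk: "x n \<in> dyadic_cube (g m) k" unfolding k_def Tpow[symmetric] by (rule cube_mem)
      define P :: int where "P = 2 ^ J m"
      have TP: "T m = t * real_of_int P" unfolding P_def using Tt by simp
      have Ppos: "P > 0" unfolding P_def by simp
      have kbounds: "P * k0$i \<le> k$i \<and> k$i + 1 \<le> P * (k0$i + 1)" for i
      proof -
        have "real_of_int (P * k0$i) \<le> T m * x n $ i"
          using xin[of i] Ppos unfolding TP by (simp add: mult.assoc mult_left_mono)
        hence 1: "P * k0$i \<le> k$i" unfolding k_def by (simp add: le_floor_iff)
        have "T m * x n $ i < real_of_int (P * (k0$i + 1))"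
          using xin[of i] Ppos unfolding TP by (simp add: mult.assoc mult_strict_left_mono)
        hence "k$i < P * (k0$i + 1)" unfolding k_def by (simp add: floor_less_iff)
        with 1 show ?thesis by simp
      qed
      have sub: "dyadic_cube (g m) k \<subseteq> lam"
      proof
        fix z assume "z \<in> dyadic_cube (g m) k"
        hence zb: "real_of_int (k$i) \<le> T m * z $ i \<and> T m * z $ i < real_of_int (k$i) + 1" for i
          unfolding dyadic_cube_def Tpow by simp
        have "real_of_int (k0$i) \<le> t * z $ i \<and> t * z $ i < real_of_int (k0$i) + 1" for i
        proof -
          have eqT: "T m * z $ i = real_of_int P * (t * z $ i)" unfolding TP by simp
          have k1: "real_of_int P * real_of_int (k0$i) \<le> real_of_int (k$i)"
            using kbounds[of i] by (metis of_int_le_iff of_int_mult)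
          have k2: "real_of_int (k$i) + 1 \<le> real_of_int P * (real_of_int (k0$i) + 1)"
            using kbounds[of i] by (metis of_int_add of_int_le_iff of_int_mult of_int_1)
          have a: "real_of_int P * real_of_int (k0$i) \<le> real_of_int P * (t * z $ i)"
            using zb[of i] k1 eqT by linarith
          have b: "real_of_int P * (t * z $ i) < real_of_int P * (real_of_int (k0$i) + 1)"
            using zb[of i] k2 eqT by linarith
          from a b Ppos show ?thesis by (simp add: mult_le_cancel_left_pos mult_less_cancel_left_pos)
        qed
        thus "z \<in> lam" unfolding lam_def dyadic_cube_def t_def[symmetric] by simp
      qed
      have kKS: "k \<in> KS m" unfolding KS_def using sub xk n1 bI[of n] unfolding m_def by blast
      have "y \<in> cbox (lo m k) (hi m k)"
      proof -
        have "(real_of_int (k$i) - 1) * s m \<le> y $ i \<and> y $ i \<le> (real_of_int (k$i) + 2) * s m" for i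
        proof -
          have xb: "real_of_int (k$i) \<le> T m * x n $ i \<and> T m * x n $ i < real_of_int (k$i) + 1"
            using xk unfolding dyadic_cube_def Tpow by simp
          have "\<bar>T m * y $ i - T m * x n $ i\<bar> = T m * \<bar>y $ i - x n $ i\<bar>"
            using Tpos[of m] by (simp add: abs_mult flip: right_diff_distrib)
          also have "\<dots> < T m * s m" using close[of i] Tpos[of m] by (simp add: mult_strict_left_mono)
          also have "T m * s m = 1" using Tpos[of m] unfolding s_def by simp
          finally have "\<bar>T m * y $ i - T m * x n $ i\<bar> < 1" .
          hence "real_of_int (k$i) - 1 \<le> T m * y $ i \<and> T m * y $ i \<le> real_of_int (k$i) + 2"
            using xb by linarith
          thus ?thesis using Tpos[of m] unfolding s_def by (simp add: field_simps)
        qed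
        thus ?thesis unfolding lo_def hi_def by (simp add: mem_box_cart)
      qed
      thus ?thesis using kKS unfolding A_def by blast
    qed
  qed
  have "ennreal vK = emeasure lebesgue K" using measK by simp
  also have "\<dots> \<le> emeasure lebesgue (N0 \<union> (\<Union>m. A m))"
    by (rule emeasure_mono[OF cover]) (use N0(3) Ameas in auto)
  also have "\<dots> \<le> emeasure lebesgue N0 + emeasure lebesgue (\<Union>m. A m)"
    by (rule emeasure_subadditive) (use N0(3) Ameas in auto)
  also have "\<dots> = emeasure lebesgue (\<Union>m. A m)" using N0(2) by simp
  also have "\<dots> \<le> (\<Sum>m. emeasure lebesgue (A m))"
    by (rule emeasure_subadditive_countably) (use Ameas in auto)
  also have "\<dots> \<le> (\<Sum>m. ennreal (C0 * e m))"
    by (intro suminf_le Ale) auto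
  also have "\<dots> = ennreal (\<Sum>m. C0 * e m)"
  proof (rule suminf_ennreal2)
    show "0 \<le> C0 * e m" for m using C0pos epos[of m] by simp
    show "summable (\<lambda>m. C0 * e m)" unfolding e_def
      by (intro summable_mult summable_geometric) simp
  qed
  also have "(\<Sum>m. C0 * e m) = vK / 2"
  proof -
    have "(\<Sum>m. C0 * e m) = C0 * eta * (\<Sum>m. (1/2::real) ^ m)"
      unfolding e_def by (subst suminf_mult[symmetric]) (auto simp: mult.assoc intro: summable_geometric)
    also have "(\<Sum>m. (1/2::real) ^ m) = 2" using suminf_geometric[of "1/2::real"] by simp
    finally show ?thesis unfolding eta_def using C0pos by simp
  qed
  finally have "vK \<le> vK / 2" using vKpos by (simp add: ennreal_le_iff)
  thus False using vKpos by simp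
qed

end
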